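(* Let $f,g\in\mathbb{N}^\mathbb{N}$. If $f$ is computably traceable and $g$ is computably traceable relative to $f$, then $g$ is computably traceable.
   Context: For a finite set $\{x_1<\dots<x_n\}\subseteq\mathbb{N}$, its canonical index is $\prod_{i=1}^n p_i^{x_i}$ with $p_i$ the $i$-th prime; $D_m$ denotes the finite set with canonical index $m$. For $h\in\mathbb{N}^\mathbb{N}$, a function $g\in\mathbb{N}^\mathbb{N}$ is computably traceable relative to $h$ if for every nondecreasing unbounded computable function $\varphi:\mathbb{N}\to\mathbb{N}_{\ge1}$ and every function $g'\le_T g$ there is an $h$-computable function $r$ such that for all $n$, $\|D_{r(n)}\|\le\varphi(n)$ and $g'(n)\in D_{r(n)}$ (here $\|\cdot\|$ is cardinality). $g$ is computably traceable if it is computably traceable relative to a computable $h$ (i.e. $r$ can be taken computable). *)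

theory Defs
  imports "HOL-Computational_Algebra.Primes" "HOL-Library.Infinite_Set"
begin

text \<open>Kleene's characterisation of the total recursive
  functions: basic functions (zero, successor, projections, the function h), closed under
  composition, primitive recursion and the mu-operator applied to regular functions.\<close>

inductive rec_in :: "(nat \<Rightarrow> nat) \<Rightarrow> nat \<Rightarrow> (nat list \<Rightarrow> nat) \<Rightarrow> bool"
  for h :: "nat \<Rightarrow> nat" where
  zero: "rec_in h 0 (\<lambda>xs. 0)"
| succ: "rec_in h 1 (\<lambda>xs. Suc (hd xs))"
| proj: "i < n \<Longrightarrow> rec_in h n (\<lambda>xs. xs ! i)"
| orc: "rec_in h 1 (\<lambda>xs. h (hd xs))"
| comp: "rec_in h m f \<Longrightarrow> length gs = m \<Longrightarrow> (\<forall>g\<in>set gs. rec_in h n g)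
          \<Longrightarrow> rec_in h n (\<lambda>xs. f (map (\<lambda>g. g xs) gs))"
| prim: "rec_in h n f \<Longrightarrow> rec_in h (Suc (Suc n)) g
          \<Longrightarrow> rec_in h (Suc n) (\<lambda>xs. case xs of [] \<Rightarrow> 0
                 | y # ys \<Rightarrow> rec_nat (f ys) (\<lambda>k r. g (k # r # ys)) y)"
| mu: "rec_in h (Suc n) f \<Longrightarrow> (\<forall>ys. length ys = n \<longrightarrow> (\<exists>y. f (y # ys) = 0))
          \<Longrightarrow> rec_in h n (\<lambda>ys. LEAST y. f (y # ys) = 0)"

definition computable_in :: "(nat \<Rightarrow> nat) \<Rightarrow> (nat \<Rightarrow> nat) \<Rightarrow> bool" where
  "computable_in h g \<longleftrightarrow> (\<exists>F. rec_in h 1 F \<and> (\<forall>x. g x = F [x]))"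

definition computable :: "(nat \<Rightarrow> nat) \<Rightarrow> bool" where
  "computable g \<longleftrightarrow> computable_in (\<lambda>_. 0) g"

text \<open>The i-th prime, counting from 0: nth_prime 0 = 2.\<close>
definition nth_prime :: "nat \<Rightarrow> nat" where
  "nth_prime i = enumerate {p. prime p} i"

definition canon_index :: "nat set \<Rightarrow> nat" where
  "canon_index S = (\<Prod>i<card S. nth_prime i ^ (sorted_list_of_set S ! i))"

definition is_D :: "nat \<Rightarrow> nat set \<Rightarrow> bool" where
  "is_D m S \<longleftrightarrow> finite S \<and> canon_index S = m"

definition traceable_rel :: "(nat \<Rightarrow> nat) \<Rightarrow> (nat \<Rightarrow> nat) \<Rightarrow> bool" where
  "traceable_rel h g \<longleftrightarrow>
     (\<forall>\<phi> g'. (mono \<phi> \<and> (\<forall>k. \<exists>n. k \<le> \<phi> n) \<and> computable \<phi> \<and> (\<forall>n. 1 \<le> \<phi> n)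
              \<and> computable_in g g') \<longrightarrow>
        (\<exists>r. computable_in h r \<and>
             (\<forall>n. \<exists>S. is_D (r n) S \<and> card S \<le> \<phi> n \<and> g' n \<in> S)))"

definition computably_traceable :: "(nat \<Rightarrow> nat) \<Rightarrow> bool" where
  "computably_traceable g \<longleftrightarrow> (\<exists>h. computable h \<and> traceable_rel h g)"

end

theory Submission
  imports Defs
begin


definition rf :: "(nat \<Rightarrow> nat) \<Rightarrow> nat \<Rightarrow> (nat list \<Rightarrow> nat) \<Rightarrow> bool" where
  "rf h n F \<longleftrightarrow> (\<exists>G. rec_in h n G \<and> (\<forall>xs. length xs = n \<longrightarrow> G xs = F xs))"

lemma rf_cong: "rf h n F \<Longrightarrow> (\<And>xs. length xs = n \<Longrightarrow> F xs = G xs) \<Longrightarrow> rf h n G"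
  unfolding rf_def by metis

lemma rf_rec: "rec_in h n F \<Longrightarrow> rf h n F"
  unfolding rf_def by blast

lemma rf_list_wit:
  "(\<forall>g\<in>set gs. rf h n g) \<Longrightarrow> \<exists>Gs. length Gs = length gs \<and> (\<forall>G\<in>set Gs. rec_in h n G) \<and>
     (\<forall>xs. length xs = n \<longrightarrow> map (\<lambda>G. G xs) Gs = map (\<lambda>g. g xs) gs)"
proof (induction gs)
  case Nil
  then show ?case by auto
next
  case (Cons g gs)
  then obtain Gs where Gs: "length Gs = length gs" "\<forall>G\<in>set Gs. rec_in h n G"
     "\<forall>xs. length xs = n \<longrightarrow> map (\<lambda>G. G xs) Gs = map (\<lambda>g. g xs) gs" by auto
  from Cons.prems obtain G where "rec_in h n G" "\<forall>xs. length xs = n \<longrightarrow> G xs = g xs"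
    unfolding rf_def by auto
  with Gs show ?case by (intro exI[of _ "G # Gs"]) auto
qed

lemma rf_comp:
  assumes "rf h m f" "length gs = m" "\<forall>g\<in>set gs. rf h n g"
  shows "rf h n (\<lambda>xs. f (map (\<lambda>g. g xs) gs))"
proof -
  obtain F where F: "rec_in h m F" "\<forall>xs. length xs = m \<longrightarrow> F xs = f xs"
    using assms(1) unfolding rf_def by auto
  obtain Gs where Gs: "length Gs = length gs" "\<forall>G\<in>set Gs. rec_in h n G"
     "\<forall>xs. length xs = n \<longrightarrow> map (\<lambda>G. G xs) Gs = map (\<lambda>g. g xs) gs"
    using rf_list_wit[OF assms(3)] by auto
  have "rec_in h n (\<lambda>xs. F (map (\<lambda>G. G xs) Gs))"
    by (rule rec_in.comp[OF F(1)]) (use Gs assms(2) in auto)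
  moreover have "\<forall>xs. length xs = n \<longrightarrow> F (map (\<lambda>G. G xs) Gs) = f (map (\<lambda>g. g xs) gs)"
    using Gs F assms(2) by auto
  ultimately show ?thesis unfolding rf_def by blast
qed

lemma rf_prim:
  assumes "rf h n f" "rf h (Suc (Suc n)) g"
  shows "rf h (Suc n) (\<lambda>xs. rec_nat (f (tl xs)) (\<lambda>k r. g (k # r # tl xs)) (hd xs))"
proof -
  obtain F where F: "rec_in h n F" "\<forall>xs. length xs = n \<longrightarrow> F xs = f xs"
    using assms(1) unfolding rf_def by auto
  obtain G where G: "rec_in h (Suc (Suc n)) G" "\<forall>xs. length xs = Suc (Suc n) \<longrightarrow> G xs = g xs"
    using assms(2) unfolding rf_def by auto
  have R: "rec_in h (Suc n) (\<lambda>xs. case xs of [] \<Rightarrow> 0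
                 | y # ys \<Rightarrow> rec_nat (F ys) (\<lambda>k r. G (k # r # ys)) y)"
    by (rule rec_in.prim[OF F(1) G(1)])
  have "rec_nat (F ys) (\<lambda>k r. G (k # r # ys)) y = rec_nat (f ys) (\<lambda>k r. g (k # r # ys)) y"
    if "length ys = n" for y ys
    using that F G by (induction y) auto
  then show ?thesis unfolding rf_def
    by (intro exI[of _ "(\<lambda>xs. case xs of [] \<Rightarrow> 0
                 | y # ys \<Rightarrow> rec_nat (F ys) (\<lambda>k r. G (k # r # ys)) y)"] conjI R)
       (auto simp: length_Suc_conv)
qed

lemma rf_mu:
  assumes "rf h (Suc n) f" "\<And>ys. length ys = n \<Longrightarrow> \<exists>y. f (y # ys) = 0"
  shows "rf h n (\<lambda>ys. LEAST y. f (y # ys) = 0)"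
proof -
  obtain F where F: "rec_in h (Suc n) F" "\<forall>xs. length xs = Suc n \<longrightarrow> F xs = f xs"
    using assms(1) unfolding rf_def by auto
  have R: "rec_in h n (\<lambda>ys. LEAST y. F (y # ys) = 0)"
    by (rule rec_in.mu[OF F(1)]) (use F assms(2) in auto)
  show ?thesis unfolding rf_def
    by (intro exI[of _ "(\<lambda>ys. LEAST y. F (y # ys) = 0)"] conjI R) (use F in auto)
qed

lemma rf_proj: "i < n \<Longrightarrow> rf h n (\<lambda>xs. xs ! i)"
  by (rule rf_rec) (rule rec_in.proj)

lemma rf_zero: "rf h n (\<lambda>xs. 0)"
proof -
  have "rf h n (\<lambda>xs. (\<lambda>xs. 0::nat) (map (\<lambda>g. g xs) ([]::(nat list \<Rightarrow> nat) list)))"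
    by (rule rf_comp[OF rf_rec[OF rec_in.zero]]) auto
  then show ?thesis by simp
qed

lemma rf_comp1: "rf h 1 f \<Longrightarrow> rf h n A \<Longrightarrow> rf h n (\<lambda>xs. f [A xs])"
  using rf_comp[of h 1 f "[A]" n] by simp

lemma rf_comp2: "rf h 2 f \<Longrightarrow> rf h n A \<Longrightarrow> rf h n B \<Longrightarrow> rf h n (\<lambda>xs. f [A xs, B xs])"
  using rf_comp[of h 2 f "[A,B]" n] by simp

lemma rf_comp3: "rf h 3 f \<Longrightarrow> rf h n A \<Longrightarrow> rf h n B \<Longrightarrow> rf h n C \<Longrightarrow> rf h n (\<lambda>xs. f [A xs, B xs, C xs])"
  using rf_comp[of h 3 f "[A,B,C]" n] by simp

lemma rf_Suc: "rf h n A \<Longrightarrow> rf h n (\<lambda>xs. Suc (A xs))"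
  using rf_comp1[OF rf_rec[OF rec_in.succ]] by simp

lemma rf_orc: "rf h n A \<Longrightarrow> rf h n (\<lambda>xs. h (A xs))"
  using rf_comp1[OF rf_rec[OF rec_in.orc]] by simp

lemma rf_const: "rf h n (\<lambda>xs. c)"
  by (induction c) (auto intro: rf_zero rf_Suc)

lemma rf_reindex:
  assumes "rf h m F" "\<forall>i<m. idx i < n"
  shows "rf h n (\<lambda>xs. F (map (\<lambda>i. xs ! idx i) [0..<m]))"
proof -
  have "rf h n (\<lambda>xs. F (map (\<lambda>g. g xs) (map (\<lambda>i xs. xs ! idx i) [0..<m])))"
    by (rule rf_comp[OF assms(1)]) (use assms(2) in \<open>auto intro: rf_proj\<close>)
  then show ?thesis by (simp add: comp_def)
qed

lemma rf_subst_hd: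
  assumes "rf h (Suc n) F" "rf h n B"
  shows "rf h n (\<lambda>xs. F (B xs # xs))"
proof -
  have "rf h n (\<lambda>xs. F (map (\<lambda>g. g xs) (B # map (\<lambda>i xs. xs ! i) [0..<n])))"
    by (rule rf_comp[OF assms(1)]) (use assms(2) in \<open>auto intro: rf_proj\<close>)
  then show ?thesis
  proof (rule rf_cong)
    fix xs :: "nat list" assume "length xs = n"
    then show "F (map (\<lambda>g. g xs) (B # map (\<lambda>i xs. xs ! i) [0..<n])) = F (B xs # xs)"
      using map_nth[of xs] by (simp add: comp_def)
  qed
qed

lemma rf_recgen:
  assumes "rf h n F0" "rf h (Suc (Suc n)) G" "rf h n B"
  shows "rf h n (\<lambda>xs. rec_nat (F0 xs) (\<lambda>k r. G (k # r # xs)) (B xs))"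
  using rf_subst_hd[OF rf_prim[OF assms(1,2)] assms(3)] by simp

lemma rf_tl_nth: "Suc j < n \<Longrightarrow> rf h n (\<lambda>xs. tl xs ! j)"
  by (rule rf_cong[OF rf_proj[of "Suc j"]]) (auto simp: nth_tl)

lemma rf_tl2_nth: "Suc (Suc j) < n \<Longrightarrow> rf h n (\<lambda>xs. tl (tl xs) ! j)"
  by (rule rf_cong[OF rf_proj[of "Suc (Suc j)"]]) (auto simp: nth_tl)

lemma rf_tl3_nth: "Suc (Suc (Suc j)) < n \<Longrightarrow> rf h n (\<lambda>xs. tl (tl (tl xs)) ! j)"
  by (rule rf_cong[OF rf_proj[of "Suc (Suc (Suc j))"]]) (auto simp: nth_tl)


lemma map_skip: "length ws = n \<Longrightarrow> map (\<lambda>i. (a#b#ws) ! (if i = 0 then 0 else Suc i)) [0..<Suc n] = a # ws"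
proof (rule nth_equalityI)
  fix i assume "length ws = n" "i < length (map (\<lambda>i. (a#b#ws) ! (if i = 0 then 0 else Suc i)) [0..<Suc n])"
  then show "map (\<lambda>i. (a#b#ws) ! (if i = 0 then 0 else Suc i)) [0..<Suc n] ! i = (a # ws) ! i"
    by (cases i) (simp_all del: upt_Suc)
qed simp

lemma rf_bin: "rf h 2 (\<lambda>xs. F (xs!0) (xs!1)) \<Longrightarrow> rf h n A \<Longrightarrow> rf h n B \<Longrightarrow> rf h n (\<lambda>xs. F (A xs) (B xs))"
  using rf_comp2[of h "\<lambda>xs. F (xs!0) (xs!1)" n A B] by simp

lemma rf_un: "rf h 1 (\<lambda>xs. F (xs!0)) \<Longrightarrow> rf h n A \<Longrightarrow> rf h n (\<lambda>xs. F (A xs))"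
  using rf_comp1[of h "\<lambda>xs. F (xs!0)" n A] by simp

lemma rf_skip1:
  assumes "rf h (Suc n) P"
  shows "rf h (Suc (Suc n)) (\<lambda>zs. P (zs!0 # tl (tl zs)))"
proof -
  have "rf h (Suc (Suc n)) (\<lambda>zs. P (map (\<lambda>i. zs ! (if i = 0 then 0 else Suc i)) [0..<Suc n]))"
    by (rule rf_reindex[OF assms]) auto
  then show ?thesis
  proof (rule rf_cong)
    fix zs :: "nat list" assume L: "length zs = Suc (Suc n)"
    then obtain a b ws where zs: "zs = a#b#ws" "length ws = n"
      by (metis length_Suc_conv)
    show "P (map (\<lambda>i. zs ! (if i = 0 then 0 else Suc i)) [0..<Suc n]) = P (zs!0 # tl (tl zs))"
      using map_skip[OF zs(2), of a b] zs(1) by simp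
  qed
qed
lemma rf_add2: "rf h 2 (\<lambda>xs. xs!0 + xs!1)"
proof -
  have "rf h 2 (\<lambda>xs. rec_nat (xs!1) (\<lambda>k r. Suc ((k#r#xs)!1)) (xs!0))"
    by (intro rf_recgen rf_proj rf_Suc) simp_all
  then show ?thesis
  proof (rule rf_cong)
    fix xs :: "nat list"
    have "\<And>a b. rec_nat b (\<lambda>k r. Suc r) a = a + (b::nat)"
      subgoal for a b by (induction a) auto done
    then show "rec_nat (xs!1) (\<lambda>k r. Suc ((k#r#xs)!1)) (xs!0) = xs!0 + xs!1"
      by simp
  qed
qed

lemma rf_add: "rf h n A \<Longrightarrow> rf h n B \<Longrightarrow> rf h n (\<lambda>xs. A xs + B xs)"
  by (rule rf_bin[OF rf_add2])

lemma rf_mult2: "rf h 2 (\<lambda>xs. xs!0 * xs!1)"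
proof -
  have "rf h 2 (\<lambda>xs. rec_nat 0 (\<lambda>k r. (k#r#xs)!1 + (k#r#xs)!3) (xs!0))"
    by (intro rf_recgen rf_proj rf_add rf_const) simp_all
  then show ?thesis
  proof (rule rf_cong)
    fix xs :: "nat list"
    have "\<And>a b. rec_nat 0 (\<lambda>k r. r + b) a = a * (b::nat)"
      subgoal for a b by (induction a) auto done
    then show "rec_nat 0 (\<lambda>k r. (k#r#xs)!1 + (k#r#xs)!3) (xs!0) = xs!0 * xs!1"
      by simp
  qed
qed

lemma rf_mult: "rf h n A \<Longrightarrow> rf h n B \<Longrightarrow> rf h n (\<lambda>xs. A xs * B xs)"
  by (rule rf_bin[OF rf_mult2])

lemma rf_pred1: "rf h 1 (\<lambda>xs. xs!0 - 1)"
proof -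
  have "rf h 1 (\<lambda>xs. rec_nat 0 (\<lambda>k r. (k#r#xs)!0) (xs!0))"
    by (intro rf_recgen rf_proj rf_const) simp_all
  then show ?thesis
  proof (rule rf_cong)
    fix xs :: "nat list"
    have "\<And>a. rec_nat 0 (\<lambda>k r. k) a = a - (1::nat)"
      subgoal for a by (cases a) auto done
    then show "rec_nat 0 (\<lambda>k r. (k#r#xs)!0) (xs!0) = xs!0 - 1"
      by simp
  qed
qed

lemma rf_pred: "rf h n A \<Longrightarrow> rf h n (\<lambda>xs. A xs - 1)"
  by (rule rf_un[OF rf_pred1])

lemma rf_minus2: "rf h 2 (\<lambda>xs. xs!0 - xs!1)"
proof -
  have "rf h 2 (\<lambda>xs. rec_nat (xs!0) (\<lambda>k r. (k#r#xs)!1 - 1) (xs!1))"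
    by (intro rf_recgen rf_proj rf_pred) simp_all
  then show ?thesis
  proof (rule rf_cong)
    fix xs :: "nat list"
    have "\<And>a b. rec_nat a (\<lambda>k r. r - 1) b = a - (b::nat)"
      subgoal for a b by (induction b) auto done
    then show "rec_nat (xs!0) (\<lambda>k r. (k#r#xs)!1 - 1) (xs!1) = xs!0 - xs!1"
      by simp
  qed
qed



lemma rf_minus: "rf h n A \<Longrightarrow> rf h n B \<Longrightarrow> rf h n (\<lambda>xs. A xs - B xs)"
  by (rule rf_bin[OF rf_minus2])

lemma rf_pow2: "rf h 2 (\<lambda>xs. xs!0 ^ xs!1)"
proof -
  have "rf h 2 (\<lambda>xs. rec_nat 1 (\<lambda>k r. (k#r#xs)!1 * (k#r#xs)!2) (xs!1))"
    by (intro rf_recgen rf_proj rf_mult rf_const) simp_all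
  then show ?thesis
  proof (rule rf_cong)
    fix xs :: "nat list"
    have "\<And>a b. rec_nat 1 (\<lambda>k r. r * a) b = (a::nat) ^ (b::nat)"
      subgoal for a b by (induction b) (simp_all add: algebra_simps) done
    then show "rec_nat 1 (\<lambda>k r. (k#r#xs)!1 * (k#r#xs)!2) (xs!1) = xs!0 ^ xs!1"
      by simp
  qed
qed

lemma rf_pow: "rf h n A \<Longrightarrow> rf h n B \<Longrightarrow> rf h n (\<lambda>xs. A xs ^ B xs)"
  by (rule rf_bin[OF rf_pow2])

lemma rf_sum:
  assumes "rf h (Suc n) (\<lambda>zs. F (zs!0) (tl zs))" "rf h n B"
  shows "rf h n (\<lambda>xs. \<Sum>i<B xs. F i xs)"
proof -
  have S: "rf h (Suc (Suc n)) (\<lambda>zs. F (zs!0) (tl (tl zs)))"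
    using rf_skip1[OF assms(1)] by simp
  have "rf h n (\<lambda>xs. rec_nat 0 (\<lambda>k r. (k#r#xs)!1 + F ((k#r#xs)!0) (tl (tl (k#r#xs)))) (B xs))"
    by (rule rf_recgen[OF rf_const _ assms(2)]) (intro rf_add rf_proj S, simp)
  then show ?thesis
  proof (rule rf_cong)
    fix xs :: "nat list"
    have "\<And>b. rec_nat 0 (\<lambda>k r. r + F k xs) b = (\<Sum>i<b. F i xs)"
      subgoal for b by (induction b) auto done
    then show "rec_nat 0 (\<lambda>k r. (k#r#xs)!1 + F ((k#r#xs)!0) (tl (tl (k#r#xs)))) (B xs) = (\<Sum>i<B xs. F i xs)"
      by simp
  qed
qed

lemma rf_prod:
  assumes "rf h (Suc n) (\<lambda>zs. F (zs!0) (tl zs))" "rf h n B"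
  shows "rf h n (\<lambda>xs. \<Prod>i<B xs. F i xs)"
proof -
  have S: "rf h (Suc (Suc n)) (\<lambda>zs. F (zs!0) (tl (tl zs)))"
    using rf_skip1[OF assms(1)] by simp
  have "rf h n (\<lambda>xs. rec_nat 1 (\<lambda>k r. (k#r#xs)!1 * F ((k#r#xs)!0) (tl (tl (k#r#xs)))) (B xs))"
    by (rule rf_recgen[OF rf_const _ assms(2)]) (intro rf_mult rf_proj S, simp)
  then show ?thesis
  proof (rule rf_cong)
    fix xs :: "nat list"
    have "\<And>b. rec_nat 1 (\<lambda>k r. r * F k xs) b = (\<Prod>i<b. F i xs)"
      subgoal for b by (induction b) (auto simp: mult.commute)  done
    then show "rec_nat 1 (\<lambda>k r. (k#r#xs)!1 * F ((k#r#xs)!0) (tl (tl (k#r#xs)))) (B xs) = (\<Prod>i<B xs. F i xs)"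
      by simp
  qed
qed

definition rp :: "(nat \<Rightarrow> nat) \<Rightarrow> nat \<Rightarrow> (nat list \<Rightarrow> bool) \<Rightarrow> bool" where
  "rp h n P \<longleftrightarrow> rf h n (\<lambda>xs. if P xs then 1 else 0)"

lemma rf_if:
  assumes "rp h n P" "rf h n A" "rf h n B"
  shows "rf h n (\<lambda>xs. if P xs then A xs else B xs)"
proof -
  have "rf h n (\<lambda>xs. (if P xs then 1 else 0) * A xs + (1 - (if P xs then 1 else 0)) * B xs)"
    using assms unfolding rp_def by (intro rf_add rf_mult rf_minus rf_const)
  then show ?thesis by (rule rf_cong) simp
qed

lemma rp_le: "rf h n A \<Longrightarrow> rf h n B \<Longrightarrow> rp h n (\<lambda>xs. A xs \<le> B xs)"
  unfolding rp_def
  by (rule rf_cong[where F="\<lambda>xs. 1 - (A xs - B xs)"]) (auto intro: rf_minus rf_const)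

lemma rp_not: "rp h n P \<Longrightarrow> rp h n (\<lambda>xs. \<not> P xs)"
  unfolding rp_def
  by (rule rf_cong[where F="\<lambda>xs. 1 - (if P xs then 1 else 0)"]) (auto intro: rf_minus rf_const)

lemma rp_conj: "rp h n P \<Longrightarrow> rp h n Q \<Longrightarrow> rp h n (\<lambda>xs. P xs \<and> Q xs)"
  unfolding rp_def
  by (rule rf_cong[where F="\<lambda>xs. (if P xs then 1 else 0) * (if Q xs then 1 else 0)"]) (auto intro: rf_mult)

lemma rp_disj: "rp h n P \<Longrightarrow> rp h n Q \<Longrightarrow> rp h n (\<lambda>xs. P xs \<or> Q xs)"
  using rp_not[OF rp_conj[OF rp_not rp_not]] by simp

lemma rp_imp: "rp h n P \<Longrightarrow> rp h n Q \<Longrightarrow> rp h n (\<lambda>xs. P xs \<longrightarrow> Q xs)"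
  using rp_disj[OF rp_not] by simp

lemma rp_less: "rf h n A \<Longrightarrow> rf h n B \<Longrightarrow> rp h n (\<lambda>xs. A xs < B xs)"
  using rp_le[OF rf_Suc] by (simp add: Suc_le_eq)

lemma rp_eq: "rf h n A \<Longrightarrow> rf h n B \<Longrightarrow> rp h n (\<lambda>xs. A xs = B xs)"
proof -
  assume a: "rf h n A" "rf h n B"
  have "rp h n (\<lambda>xs. A xs \<le> B xs \<and> B xs \<le> A xs)" by (intro rp_conj rp_le a)
  then show ?thesis unfolding rp_def by (rule rf_cong) auto
qed

lemma ind_sum_pos: "(0 < (\<Sum>i<(b::nat). if P i then 1 else (0::nat))) \<longleftrightarrow> (\<exists>i<b. P i)"
  by (induction b) (auto simp: less_Suc_eq)

lemma rp_ex_less: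
  assumes "rp h (Suc n) (\<lambda>zs. P (zs!0) (tl zs))" "rf h n B"
  shows "rp h n (\<lambda>xs. \<exists>i<B xs. P i xs)"
proof -
  have "rp h n (\<lambda>xs. 0 < (\<Sum>i<B xs. if P i xs then 1 else (0::nat)))"
    unfolding rp_def by (rule rp_less[unfolded rp_def], rule rf_const, rule rf_sum, rule assms(1)[unfolded rp_def], rule assms(2))
  then show ?thesis unfolding rp_def
    by (rule rf_cong) (simp only: ind_sum_pos)
qed



lemma rf_tl: "rf h n A \<Longrightarrow> rf h (Suc n) (\<lambda>zs. A (tl zs))"
proof -
  assume a: "rf h n A"
  have "rf h (Suc n) (\<lambda>zs. A (map (\<lambda>i. zs ! Suc i) [0..<n]))"
    by (rule rf_reindex[OF a]) auto
  then show ?thesis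
  proof (rule rf_cong)
    fix zs :: "nat list" assume "length zs = Suc n"
    then have "map (\<lambda>i. zs ! Suc i) [0..<n] = tl zs"
      by (intro nth_equalityI) (auto simp: nth_tl)
    then show "A (map (\<lambda>i. zs ! Suc i) [0..<n]) = A (tl zs)" by simp
  qed
qed

lemma rp_all_less:
  assumes "rp h (Suc n) (\<lambda>zs. P (zs!0) (tl zs))" "rf h n B"
  shows "rp h n (\<lambda>xs. \<forall>i<B xs. P i xs)"
proof -
  have "rp h n (\<lambda>xs. \<not> (\<exists>i<B xs. \<not> P i xs))"
    by (intro rp_not rp_ex_less[where P="\<lambda>i xs. \<not> P i xs"] assms)
  then show ?thesis by simp
qed

lemma rf_least:
  assumes "rp h (Suc n) (\<lambda>zs. P (zs!0) (tl zs))" "\<And>xs. length xs = n \<Longrightarrow> \<exists>y. P y xs"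
  shows "rf h n (\<lambda>xs. LEAST y. P y xs)"
proof -
  have R: "rf h (Suc n) (\<lambda>zs. if P (zs!0) (tl zs) then 0 else 1)"
    by (intro rf_if assms(1) rf_const)
  have "rf h n (\<lambda>ys. LEAST y. (\<lambda>zs. if P (zs!0) (tl zs) then 0 else (1::nat)) (y # ys) = 0)"
    by (rule rf_mu[OF R]) (simp add: assms(2))
  then show ?thesis by (rule rf_cong) (rule arg_cong[where f=Least], rule ext, simp)
qed

lemma rp_dvd:
  assumes "rf h n A" "rf h n B"
  shows "rp h n (\<lambda>xs. A xs dvd B xs)"
proof -
  have "rp h n (\<lambda>xs. \<exists>k<Suc (B xs). A xs * k = B xs)"
    by (intro rp_ex_less[where P="\<lambda>k xs. A xs * k = B xs"] rp_eq rf_mult rf_tl assms rf_proj rf_Suc) simp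
  moreover have "(\<exists>k<Suc b. a * k = b) \<longleftrightarrow> a dvd b" for a b :: nat
  proof
    assume "a dvd b"
    then obtain k where k: "b = a * k" by auto
    show "\<exists>k<Suc b. a * k = b"
    proof (cases "b = 0")
      case True then show ?thesis by auto
    next
      case False
      then have "a \<ge> 1" using k by (cases a) auto
      then have "1 * k \<le> a * k" by (rule mult_le_mono1)
      then have "k \<le> b" unfolding k by (simp only: mult_1)
      then have "k < Suc b" by (rule le_imp_less_Suc)
      then show ?thesis using k by blast
    qed
  qed auto
  ultimately show ?thesis by simp
qed

lemma prime_bounded: "prime (p::nat) \<longleftrightarrow> 1 < p \<and> \<not> (\<exists>d<p. 2 \<le> d \<and> d dvd p)"
  unfolding prime_nat_iff' by auto

lemma rp_prime:
  assumes "rf h n A"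
  shows "rp h n (\<lambda>xs. prime (A xs))"
proof -
  have "rp h n (\<lambda>xs. 1 < A xs \<and> \<not> (\<exists>d<A xs. 2 \<le> d \<and> d dvd A xs))"
    by (intro rp_conj rp_less rp_not rp_ex_less[where P="\<lambda>d xs. 2 \<le> d \<and> d dvd A xs"]
        rf_const assms rp_le rp_dvd rf_proj rf_tl) simp_all
  then show ?thesis by (simp only: prime_bounded)
qed

definition ex :: "nat \<Rightarrow> nat \<Rightarrow> nat" where
  "ex p m = (LEAST e. p \<le> 1 \<or> m = 0 \<or> \<not> p ^ Suc e dvd m)"

lemma rf_ex:
  assumes "rf h n A" "rf h n B"
  shows "rf h n (\<lambda>xs. ex (A xs) (B xs))"
  unfolding ex_def
proof (rule rf_least[where P="\<lambda>e xs. A xs \<le> 1 \<or> B xs = 0 \<or> \<not> A xs ^ Suc e dvd B xs"])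
  show "rp h (Suc n) (\<lambda>zs. A (tl zs) \<le> 1 \<or> B (tl zs) = 0 \<or> \<not> A (tl zs) ^ Suc (zs ! 0) dvd B (tl zs))"
    by (intro rp_disj rp_le rp_eq rp_not rp_dvd rf_pow rf_Suc rf_proj rf_tl assms rf_const) simp
next
  fix xs :: "nat list"
  show "\<exists>y. A xs \<le> 1 \<or> B xs = 0 \<or> \<not> A xs ^ Suc y dvd B xs"
  proof (cases "A xs \<le> 1 \<or> B xs = 0")
    case False
    then have A2: "2 \<le> A xs" by simp
    have "B xs < 2 ^ B xs" by (rule less_exp)
    also have "\<dots> \<le> A xs ^ B xs" by (rule power_mono[OF A2]) simp
    also have "\<dots> \<le> A xs ^ Suc (B xs)" by (rule power_increasing) (use A2 in simp_all)
    finally have "B xs < A xs ^ Suc (B xs)" .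
    then have "\<not> A xs ^ Suc (B xs) dvd B xs" using False by (auto dest: dvd_imp_le)
    then show ?thesis by blast
  qed auto
qed

lemma ex_mult: "prime p \<Longrightarrow> ex p m = multiplicity p m"
proof (cases "m = 0")
  case True then show ?thesis by (simp add: ex_def)
next
  case False
  assume p: "prime p"
  then have "\<not> p \<le> 1" using prime_gt_1_nat by (simp add: not_le)
  then have "ex p m = (LEAST e. \<not> p ^ Suc e dvd m)" using False by (simp add: ex_def)
  also have "\<dots> = multiplicity p m"
  proof (rule Least_equality)
    have u: "\<not> is_unit p" using p by (simp add: prime_nat_iff)
    show "\<not> p ^ Suc (multiplicity p m) dvd m"
      using power_dvd_iff_le_multiplicity[OF False u, of "Suc (multiplicity p m)"] by simp
    show "multiplicity p m \<le> y" if "\<not> p ^ Suc y dvd m" for y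
      using power_dvd_iff_le_multiplicity[OF False u, of "Suc y"] that by simp
  qed
  finally show ?thesis .
qed

definition np :: "nat \<Rightarrow> nat" where
  "np i = rec_nat 2 (\<lambda>k r. LEAST p. r < p \<and> prime p) i"

lemma nth_prime_np: "nth_prime i = np i"
proof (induction i)
  case 0
  have "(LEAST n::nat. n \<in> {p. prime p}) = 2"
    by (rule Least_equality) (auto simp: prime_ge_2_nat)
  then show ?case by (simp add: nth_prime_def np_def enumerate_0)
next
  case (Suc i)
  have inf: "infinite {p::nat. prime p}" by (rule primes_infinite)
  show ?case using Suc unfolding nth_prime_def np_def
    by (simp add: enumerate_Suc''[OF inf] conj_commute)
qed

lemma rf_np:
  assumes "rf h n A"
  shows "rf h n (\<lambda>xs. nth_prime (A xs))"
proof -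
  have "rf h 1 (\<lambda>xs. rec_nat 2 (\<lambda>k r. LEAST p. ((k#r#xs)!1) < p \<and> prime p) (xs!0))"
  proof (rule rf_recgen[OF rf_const _ rf_proj])
    show "rf h (Suc (Suc 1)) (\<lambda>zs. LEAST p. zs ! 1 < p \<and> prime p)"
    proof (rule rf_least[where P="\<lambda>p zs. zs ! 1 < p \<and> prime p"])
      show "rp h (Suc (Suc (Suc 1))) (\<lambda>zs'. tl zs' ! 1 < zs' ! 0 \<and> prime (zs' ! 0))"
        by (intro rp_conj rp_less rp_prime rf_tl_nth rf_proj) simp_all
      show "\<exists>y. xs ! 1 < y \<and> prime y" for xs :: "nat list"
        using bigger_prime[of "xs!1"] by blast
    qed
  qed simp
  then have "rf h 1 (\<lambda>xs. nth_prime (xs!0))"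
    by (rule rf_cong) (simp add: nth_prime_np np_def)
  then show ?thesis by (rule rf_un) (rule assms)
qed



definition InDec :: "nat \<Rightarrow> nat \<Rightarrow> bool" where
  "InDec x m \<longleftrightarrow> x = ex 2 m \<or> (\<exists>p<Suc m. prime p \<and> p dvd m \<and> x = ex p m)"

definition CardDec :: "nat \<Rightarrow> nat" where
  "CardDec m = (\<Sum>x<Suc m. if InDec x m then 1 else 0)"

definition InU :: "nat \<Rightarrow> nat \<Rightarrow> nat \<Rightarrow> bool" where
  "InU k T x \<longleftrightarrow> (\<exists>m<Suc T. InDec m T \<and> CardDec m \<le> k \<and> InDec x m)"

definition Enc :: "nat \<Rightarrow> nat \<Rightarrow> nat" where
  "Enc k T = (\<Prod>x<Suc T. if InU k T x then nth_prime (\<Sum>y<x. if InU k T y then 1 else 0) ^ x else 1)"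

definition isqrt :: "nat \<Rightarrow> nat" where
  "isqrt x = (LEAST k. x < Suc k * Suc k)"

lemma rp_InDec:
  assumes "rf h n A" "rf h n B"
  shows "rp h n (\<lambda>xs. InDec (A xs) (B xs))"
  unfolding InDec_def
  by (intro rp_disj rp_eq rf_ex rf_const assms
      rp_ex_less[where P="\<lambda>p xs. prime p \<and> p dvd B xs \<and> A xs = ex p (B xs)"]
      rp_conj rp_prime rp_dvd rf_proj rf_tl rf_Suc) simp_all

lemma rf_CardDec:
  assumes "rf h n A"
  shows "rf h n (\<lambda>xs. CardDec (A xs))"
  unfolding CardDec_def
  by (intro rf_sum[where F="\<lambda>x xs. if InDec x (A xs) then 1 else 0"] rf_if rp_InDec
      rf_const rf_proj rf_tl assms rf_Suc) simp_all

lemma rp_InU: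
  assumes "rf h n K" "rf h n T" "rf h n X"
  shows "rp h n (\<lambda>xs. InU (K xs) (T xs) (X xs))"
  unfolding InU_def
  by (intro rp_ex_less[where P="\<lambda>m xs. InDec m (T xs) \<and> CardDec m \<le> K xs \<and> InDec (X xs) m"]
      rp_conj rp_InDec rp_le rf_CardDec rf_proj rf_tl assms rf_Suc) simp_all

lemma rf_Enc:
  assumes "rf h n K" "rf h n T"
  shows "rf h n (\<lambda>xs. Enc (K xs) (T xs))"
  unfolding Enc_def
  by (intro rf_prod[where F="\<lambda>x xs. if InU (K xs) (T xs) x then nth_prime (\<Sum>y<x. if InU (K xs) (T xs) y then 1 else 0) ^ x else 1"]
      rf_if rp_InU rf_pow rf_np
      rf_sum[where F="\<lambda>y xs. if InU (K (tl xs)) (T (tl xs)) y then 1 else 0"]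
      rf_const rf_proj rf_tl assms rf_Suc) simp_all

lemma rf_isqrt:
  assumes "rf h n A"
  shows "rf h n (\<lambda>xs. isqrt (A xs))"
  unfolding isqrt_def
proof (rule rf_least[where P="\<lambda>k xs. A xs < Suc k * Suc k"])
  show "rp h (Suc n) (\<lambda>zs. A (tl zs) < Suc (zs ! 0) * Suc (zs ! 0))"
    by (intro rp_less rf_mult rf_Suc rf_proj rf_tl assms) simp_all
  show "\<exists>y. A xs < Suc y * Suc y" for xs
    by (rule exI[of _ "A xs"]) simp
qed



lemma nth_prime_prime: "prime (nth_prime i)"
  unfolding nth_prime_def using enumerate_in_set[OF primes_infinite] by simp

lemma nth_prime_inj: "nth_prime i = nth_prime j \<longleftrightarrow> i = j"
  unfolding nth_prime_def
  by (metis enumerate_mono primes_infinite less_irrefl nat_neq_iff)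

lemma nth_prime_0: "nth_prime 0 = 2"
  by (simp add: nth_prime_np np_def)

lemma mult_prime_power:
  assumes "prime (p::nat)" "prime q"
  shows "multiplicity p (q ^ e) = (if p = q then e else 0)"
proof (cases "p = q")
  case True then show ?thesis using assms by (simp add: prime_imp_prime_elem)
next
  case False
  have "\<not> p dvd q ^ e"
    using False assms primes_dvd_imp_eq prime_dvd_power by blast
  then show ?thesis using False by (simp add: not_dvd_imp_multiplicity_0)
qed

abbreviation sl :: "nat set \<Rightarrow> nat list" where "sl S \<equiv> sorted_list_of_set S"

lemma canon_pos: "canon_index S > 0"
  unfolding canon_index_def
  by (rule prod_pos) (use nth_prime_prime prime_gt_0_nat in auto)

lemma mult_canon:
  assumes "prime p"
  shows "multiplicity p (canon_index S) = (\<Sum>i<card S. if p = nth_prime i then sl S ! i else 0)"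
  unfolding canon_index_def
proof (subst prime_elem_multiplicity_prod_distrib)
  show "prime_elem p" using assms by (simp add: prime_imp_prime_elem)
  show "0 \<notin> (\<lambda>i. nth_prime i ^ sl S ! i) ` {..<card S}"
    by (clarsimp simp: power_eq_0_iff) (metis nth_prime_prime not_prime_0)
qed (use assms in \<open>simp_all add: mult_prime_power nth_prime_prime\<close>)

lemma mult_canon_in:
  assumes "i < card S"
  shows "multiplicity (nth_prime i) (canon_index S) = sl S ! i"
proof -
  have "(\<Sum>j<card S. if nth_prime i = nth_prime j then sl S ! j else 0)
      = (\<Sum>j<card S. if i = j then sl S ! j else 0)"
    by (simp add: nth_prime_inj)
  also have "\<dots> = sl S ! i" using assms by simp
  finally show ?thesis using mult_canon[OF nth_prime_prime] by simp
qed

lemma mult_canon_out: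
  assumes "prime p" "\<forall>i<card S. p \<noteq> nth_prime i"
  shows "multiplicity p (canon_index S) = 0"
  using mult_canon[OF assms(1)] assms(2) by simp

definition DecSet :: "nat \<Rightarrow> nat set" where "DecSet m = {x. InDec x m}"

lemma ex_le: "prime p \<Longrightarrow> ex p m \<le> m"
proof (cases "m = 0")
  case True then show ?thesis by (simp add: ex_def)
next
  case False
  assume p: "prime p"
  have u: "\<not> is_unit p" using p by (simp add: prime_nat_iff)
  have "p ^ multiplicity p m dvd m" using power_dvd_iff_le_multiplicity[OF False u] by simp
  then have "p ^ multiplicity p m \<le> m" by (rule dvd_imp_le) (use False in simp)
  moreover have "multiplicity p m < p ^ multiplicity p m"
  proof -
    have "multiplicity p m < 2 ^ multiplicity p m" by (rule less_exp)
    also have "\<dots> \<le> p ^ multiplicity p m" by (rule power_mono) (use prime_ge_2_nat[OF p] in auto)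
    finally show ?thesis .
  qed
  ultimately show ?thesis using ex_mult[OF p] by simp
qed



lemma InDec_le: "InDec x m \<Longrightarrow> x \<le> m"
  unfolding InDec_def using ex_le two_is_prime_nat by auto

lemma DecSet_sub: "DecSet m \<subseteq> {..<Suc m}"
  unfolding DecSet_def using InDec_le by (auto simp: less_Suc_eq_le)

lemma finite_DecSet: "finite (DecSet m)"
  using DecSet_sub finite_subset by blast

lemma ind_sum_card: "(\<Sum>x\<in>A. if P x then 1 else (0::nat)) = card {x\<in>A. P x}" if "finite A"
  using that by (simp add: sum.inter_filter[symmetric])

lemma CardDec_card: "CardDec m = card (DecSet m)"
proof -
  have "CardDec m = card {x\<in>{..<Suc m}. InDec x m}"
    unfolding CardDec_def by (rule ind_sum_card) simp
  also have "{x\<in>{..<Suc m}. InDec x m} = DecSet m"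
    using DecSet_sub unfolding DecSet_def by auto
  finally show ?thesis .
qed

lemma mult_pos: "prime (p::nat) \<Longrightarrow> m \<noteq> 0 \<Longrightarrow> p dvd m \<Longrightarrow> multiplicity p m > 0"
  using power_dvd_iff_le_multiplicity[of m p 1] by (simp add: prime_nat_iff)

lemma sl_facts:
  assumes "finite S"
  shows "set (sl S) = S" "length (sl S) = card S" "sorted_wrt (<) (sl S)" "distinct (sl S)"
  using assms by (auto simp: strict_sorted_list_of_set)

lemma Dec_canon:
  assumes "finite S"
  shows "S \<subseteq> DecSet (canon_index S)"
    and "x \<in> DecSet (canon_index S) \<Longrightarrow> x \<in> S \<or> (S = {} \<and> x = 0)"
proof -
  let ?m = "canon_index S"
  let ?xs = "sl S"
  have m0: "?m \<noteq> 0" using canon_pos[of S] by simp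
  note F = sl_facts[OF assms]
  show "S \<subseteq> DecSet ?m"
  proof
    fix x assume "x \<in> S"
    then have "x \<in> set ?xs" using F(1) by simp
    then obtain i where i: "i < card S" "x = ?xs ! i"
      using F(2) by (auto simp: in_set_conv_nth)
    show "x \<in> DecSet ?m"
    proof (cases "i = 0")
      case True
      then have "ex 2 ?m = x"
        using mult_canon_in[OF i(1)] i(2) nth_prime_0 ex_mult[OF two_is_prime_nat] by simp
      then show ?thesis unfolding DecSet_def InDec_def by auto
    next
      case False
      then have "?xs ! 0 < ?xs ! i" using F i by (intro sorted_wrt_nth_less[OF F(3)]) auto
      then have pos: "multiplicity (nth_prime i) ?m > 0" using mult_canon_in[OF i(1)] by simp
      then have d: "nth_prime i dvd ?m"
        using not_dvd_imp_multiplicity_0 by fastforce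
      then have "nth_prime i < Suc ?m" using m0 by (simp add: dvd_imp_le le_imp_less_Suc)
      moreover have "x = ex (nth_prime i) ?m"
        using mult_canon_in[OF i(1)] i(2) ex_mult[OF nth_prime_prime] by simp
      ultimately show ?thesis unfolding DecSet_def InDec_def using d nth_prime_prime by blast
    qed
  qed
  assume "x \<in> DecSet ?m"
  then consider "x = ex 2 ?m" | p where "prime p" "p dvd ?m" "x = ex p ?m"
    unfolding DecSet_def InDec_def by blast
  then show "x \<in> S \<or> (S = {} \<and> x = 0)"
  proof cases
    case 1
    show ?thesis
    proof (cases "card S = 0")
      case True
      then have "S = {}" using assms by simp
      then have "?m = 1" by (simp add: canon_index_def)
      then show ?thesis using 1 \<open>S = {}\<close> by (simp add: ex_mult[OF two_is_prime_nat])
    next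
      case False
      then have "x = ?xs ! 0" using 1 mult_canon_in[of 0 S] nth_prime_0 ex_mult[OF two_is_prime_nat] by simp
      then show ?thesis using False F(1,2) nth_mem[of 0 ?xs] by simp
    qed
  next
    case (2 p)
    have "\<exists>i<card S. p = nth_prime i"
    proof (rule ccontr)
      assume "\<not> ?thesis"
      then have "multiplicity p ?m = 0" using mult_canon_out[OF 2(1)] by blast
      then show False using mult_pos[OF 2(1) m0 2(2)] by simp
    qed
    then obtain i where i: "i < card S" "p = nth_prime i" by blast
    then have "x = ?xs ! i" using 2 mult_canon_in[OF i(1)] ex_mult by simp
    then show ?thesis using i F(1,2) nth_mem[of i ?xs] by simp
  qed
qed

lemma card_Dec_canon:
  assumes "is_D m S"
  shows "S \<subseteq> DecSet m" "card (DecSet m) \<le> max 1 (card S)"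
proof -
  have f: "finite S" and m: "m = canon_index S" using assms unfolding is_D_def by auto
  show "S \<subseteq> DecSet m" using Dec_canon(1)[OF f] m by simp
  show "card (DecSet m) \<le> max 1 (card S)"
  proof (cases "S = {}")
    case True
    then have "DecSet m \<subseteq> {0}" using Dec_canon(2)[OF f] m by auto
    then have "card (DecSet m) \<le> card {0::nat}" by (intro card_mono) simp_all
    then show ?thesis by simp
  next
    case False
    then have "DecSet m \<subseteq> S" using Dec_canon(2)[OF f] m by auto
    then have "card (DecSet m) \<le> card S" by (rule card_mono[OF f])
    then show ?thesis by simp
  qed
qed



definition USet :: "nat \<Rightarrow> nat \<Rightarrow> nat set" where "USet k T = {x. InU k T x}"

lemma USet_sub: "USet k T \<subseteq> {..<Suc T}"
proof
  fix x assume "x \<in> USet k T"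
  then obtain m where "InDec m T" "InDec x m" unfolding USet_def InU_def by blast
  then have "x \<le> T" using InDec_le le_trans by blast
  then show "x \<in> {..<Suc T}" by simp
qed

lemma finite_USet: "finite (USet k T)"
  using USet_sub finite_subset by blast

lemma USet_UN: "USet k T \<subseteq> (\<Union>m\<in>{m\<in>DecSet T. card (DecSet m) \<le> k}. DecSet m)"
  unfolding USet_def InU_def DecSet_def using CardDec_card unfolding DecSet_def by auto

lemma card_USet:
  assumes "card (DecSet T) \<le> k"
  shows "card (USet k T) \<le> k * k"
proof -
  let ?I = "{m\<in>DecSet T. card (DecSet m) \<le> k}"
  have fI: "finite ?I" using finite_DecSet by simp
  have "card (USet k T) \<le> card (\<Union>m\<in>?I. DecSet m)"
    by (rule card_mono[OF _ USet_UN]) (use fI finite_DecSet in blast)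
  also have "\<dots> \<le> (\<Sum>m\<in>?I. card (DecSet m))" by (rule card_UN_le[OF fI])
  also have "\<dots> \<le> (\<Sum>m\<in>?I. k)" by (rule sum_mono) simp
  also have "\<dots> = card ?I * k" by simp
  also have "card ?I \<le> card (DecSet T)" by (rule card_mono) (simp_all add: finite_DecSet)
  then have "card ?I * k \<le> k * k" using assms by (simp add: mult_le_mono1)
  finally show ?thesis .
qed

lemma canon_prod:
  assumes "finite S"
  shows "canon_index S = (\<Prod>x\<in>S. nth_prime (card {y\<in>S. y < x}) ^ x)"
proof -
  let ?xs = "sl S"
  note F = sl_facts[OF assms]
  have bij: "bij_betw ((!) ?xs) {..<length ?xs} S"
    by (rule bij_betw_nth) (use F in simp_all)
  have c: "card {y\<in>S. y < ?xs ! i} = i" if i: "i < length ?xs" for i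
  proof -
    have "{y\<in>S. y < ?xs ! i} = (!) ?xs ` {..<i}"
    proof
      show "{y\<in>S. y < ?xs ! i} \<subseteq> (!) ?xs ` {..<i}"
      proof
        fix y assume y: "y \<in> {y\<in>S. y < ?xs ! i}"
        then have "y \<in> set ?xs" using F(1) by simp
        then obtain j where j: "j < length ?xs" "?xs ! j = y" by (auto simp: in_set_conv_nth)
        have "j < i"
        proof (rule ccontr)
          assume "\<not> j < i"
          then have "?xs ! i \<le> ?xs ! j"
            using j(1) F(3) by (intro sorted_nth_mono) (simp_all add: strict_sorted_iff)
          then show False using y j(2) by simp
        qed
        then show "y \<in> (!) ?xs ` {..<i}" using j(2) by blast
      qed
      show "(!) ?xs ` {..<i} \<subseteq> {y\<in>S. y < ?xs ! i}"
      proof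
        fix y assume "y \<in> (!) ?xs ` {..<i}"
        then obtain j where j: "j < i" "y = ?xs ! j" by blast
        have "y < ?xs ! i" using sorted_wrt_nth_less[OF F(3) j(1) i] j(2) by simp
        moreover have "y \<in> S" using j i F(1) nth_mem[of j ?xs] by simp
        ultimately show "y \<in> {y\<in>S. y < ?xs ! i}" by simp
      qed
    qed
    moreover have "inj_on ((!) ?xs) {..<i}" by (rule inj_on_nth) (use F i in auto)
    ultimately show ?thesis by (simp add: card_image)
  qed
  have "(\<Prod>x\<in>S. nth_prime (card {y\<in>S. y < x}) ^ x)
        = (\<Prod>i\<in>{..<length ?xs}. nth_prime (card {y\<in>S. y < ?xs ! i}) ^ (?xs ! i))"
    by (rule prod.reindex_bij_betw[OF bij, symmetric])
  also have "\<dots> = (\<Prod>i\<in>{..<length ?xs}. nth_prime i ^ (?xs ! i))"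
    by (rule prod.cong) (simp_all add: c)
  finally show ?thesis unfolding canon_index_def using F(2) by simp
qed

lemma Enc_canon: "Enc k T = canon_index (USet k T)"
proof -
  have s: "(\<Sum>y<x. if InU k T y then 1 else 0) = card {y\<in>USet k T. y < x}" for x
  proof -
    have "(\<Sum>y<x. if InU k T y then 1 else 0) = card {y\<in>{..<x}. InU k T y}"
      by (rule ind_sum_card) simp
    also have "{y\<in>{..<x}. InU k T y} = {y\<in>USet k T. y < x}" unfolding USet_def by auto
    finally show ?thesis .
  qed
  have "Enc k T = (\<Prod>x\<in>{..<Suc T}. if InU k T x then nth_prime (card {y\<in>USet k T. y < x}) ^ x else 1)"
    unfolding Enc_def s ..
  also have "\<dots> = (\<Prod>x\<in>{x\<in>{..<Suc T}. InU k T x}. nth_prime (card {y\<in>USet k T. y < x}) ^ x)"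
    by (rule prod.inter_filter[symmetric]) simp
  also have "{x\<in>{..<Suc T}. InU k T x} = USet k T"
    using USet_sub unfolding USet_def by auto
  finally show ?thesis using canon_prod[OF finite_USet] by simp
qed

lemma isqrt_sq: "isqrt x * isqrt x \<le> x"
proof (cases "isqrt x")
  case 0 then show ?thesis by simp
next
  case (Suc j)
  then have "j < isqrt x" by simp
  then have "\<not> x < Suc j * Suc j" unfolding isqrt_def by (rule not_less_Least)
  then show ?thesis using Suc by simp
qed

lemma isqrt_prop: "x < Suc (isqrt x) * Suc (isqrt x)"
  unfolding isqrt_def by (rule LeastI[of _ x]) simp

lemma isqrt_ge: "k * k \<le> x \<Longrightarrow> k \<le> isqrt x"
proof (rule ccontr)
  assume a: "k * k \<le> x" "\<not> k \<le> isqrt x"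
  then have "Suc (isqrt x) \<le> k" by simp
  then have "Suc (isqrt x) * Suc (isqrt x) \<le> k * k" by (intro mult_le_mono)
  then show False using a(1) isqrt_prop[of x] by simp
qed

lemma isqrt_mono: "x \<le> y \<Longrightarrow> isqrt x \<le> isqrt y"
  unfolding isqrt_def
  by (rule Least_le) (use isqrt_prop[of y, unfolded isqrt_def] in simp)



lemma lift_rec: "rec_in (\<lambda>_. 0) n F \<Longrightarrow> rf h n F"
proof (induction rule: rec_in.induct)
  case zero then show ?case by (rule rf_rec[OF rec_in.zero])
next
  case succ then show ?case by (rule rf_rec[OF rec_in.succ])
next
  case (proj i n) then show ?case by (rule rf_proj)
next
  case orc then show ?case using rf_zero by simp
next
  case (comp m f gs n) then show ?case by (intro rf_comp) auto
next
  case (prim n f g)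
  have "rf h (Suc n) (\<lambda>xs. rec_nat (f (tl xs)) (\<lambda>k r. g (k # r # tl xs)) (hd xs))"
    by (rule rf_prim[OF prim.IH])
  then show ?case by (rule rf_cong) (auto simp: length_Suc_conv)
next
  case (mu n f) then show ?case by (intro rf_mu) auto
qed

lemma lift_rf: "rf (\<lambda>_. 0) n F \<Longrightarrow> rf h n F"
  unfolding rf_def[of "\<lambda>_. 0"] using lift_rec rf_cong by metis

lemma ci_rf: "computable_in h g \<Longrightarrow> rf h 1 (\<lambda>xs. g (xs!0))"
  unfolding computable_in_def
proof (elim exE conjE)
  fix F assume F: "rec_in h 1 F" "\<forall>x. g x = F [x]"
  show "rf h 1 (\<lambda>xs. g (xs!0))"
  proof (rule rf_cong[OF rf_rec[OF F(1)]])
    fix xs :: "nat list" assume "length xs = 1"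
    then have "xs = [xs!0]" by (cases xs) auto
    then show "F xs = g (xs!0)" using F(2) by metis
  qed
qed

lemma rf_ci: "rf h 1 (\<lambda>xs. g (xs!0)) \<Longrightarrow> computable_in h g"
  unfolding computable_in_def rf_def by (metis One_nat_def length_Cons list.size(3) nth_Cons_0)

theorem mainTheorem4:
  fixes f g :: "nat \<Rightarrow> nat"
  assumes "computably_traceable f"
    and "traceable_rel f g"
  shows "computably_traceable g"
proof -
  obtain h0 where h0: "computable h0" "traceable_rel h0 f"
    using assms(1) unfolding computably_traceable_def by blast
  have "traceable_rel h0 g"
    unfolding traceable_rel_def
  proof (intro allI impI)
    fix \<phi> g' :: "nat \<Rightarrow> nat"
    assume A: "mono \<phi> \<and> (\<forall>k. \<exists>n. k \<le> \<phi> n) \<and> computable \<phi> \<and> (\<forall>n. 1 \<le> \<phi> n) \<and> computable_in g g'"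
    define \<psi> where "\<psi> n = isqrt (\<phi> n)" for n
    have c\<phi>: "rf (\<lambda>_. 0) 1 (\<lambda>xs. \<phi> (xs!0))"
      using A ci_rf unfolding computable_def by blast
    have c\<psi>: "computable \<psi>"
      unfolding computable_def \<psi>_def by (rule rf_ci, rule rf_isqrt[OF c\<phi>])
    have m\<psi>: "mono \<psi>"
      unfolding \<psi>_def using A by (intro monoI isqrt_mono) (simp add: monoD)
    have u\<psi>: "\<forall>k. \<exists>n. k \<le> \<psi> n"
    proof
      fix k
      obtain n where "k * k \<le> \<phi> n" using A by blast
      then show "\<exists>n. k \<le> \<psi> n" unfolding \<psi>_def using isqrt_ge by blast
    qed
    have p\<psi>: "\<forall>n. 1 \<le> \<psi> n"
      unfolding \<psi>_def using A isqrt_ge[of 1] by simp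
    obtain r1 where r1: "computable_in f r1"
      "\<forall>n. \<exists>S. is_D (r1 n) S \<and> card S \<le> \<psi> n \<and> g' n \<in> S"
      using assms(2) A c\<psi> m\<psi> u\<psi> p\<psi> unfolding traceable_rel_def by blast
    obtain r2 where r2: "computable_in h0 r2"
      "\<forall>n. \<exists>S. is_D (r2 n) S \<and> card S \<le> \<psi> n \<and> r1 n \<in> S"
      using h0(2) r1(1) c\<psi> m\<psi> u\<psi> p\<psi> unfolding traceable_rel_def by blast
    define r where "r n = Enc (\<psi> n) (r2 n)" for n
    have cr: "computable_in h0 r"
      unfolding r_def \<psi>_def
      by (rule rf_ci, rule rf_Enc[OF rf_isqrt[OF lift_rf[OF c\<phi>]] ci_rf[OF r2(1)]])
    have "\<exists>S. is_D (r n) S \<and> card S \<le> \<phi> n \<and> g' n \<in> S" for n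
    proof -
      obtain S1 where S1: "is_D (r1 n) S1" "card S1 \<le> \<psi> n" "g' n \<in> S1" using r1(2) by blast
      obtain S2 where S2: "is_D (r2 n) S2" "card S2 \<le> \<psi> n" "r1 n \<in> S2" using r2(2) by blast
      have k1: "1 \<le> \<psi> n" using p\<psi> by blast
      have "is_D (r n) (USet (\<psi> n) (r2 n))"
        unfolding is_D_def r_def using finite_USet Enc_canon by simp
      moreover have "card (USet (\<psi> n) (r2 n)) \<le> \<phi> n"
      proof -
        have "card (DecSet (r2 n)) \<le> \<psi> n" using card_Dec_canon(2)[OF S2(1)] S2(2) k1 by simp
        then have "card (USet (\<psi> n) (r2 n)) \<le> \<psi> n * \<psi> n" by (rule card_USet)
        also have "\<dots> \<le> \<phi> n" unfolding \<psi>_def by (rule isqrt_sq)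
        finally show ?thesis .
      qed
      moreover have "g' n \<in> USet (\<psi> n) (r2 n)"
      proof -
        have a: "InDec (r1 n) (r2 n)" using card_Dec_canon(1)[OF S2(1)] S2(3) unfolding DecSet_def by blast
        have b: "CardDec (r1 n) \<le> \<psi> n" using card_Dec_canon(2)[OF S1(1)] S1(2) k1 CardDec_card by simp
        have c: "InDec (g' n) (r1 n)" using card_Dec_canon(1)[OF S1(1)] S1(3) unfolding DecSet_def by blast
        have d: "r1 n < Suc (r2 n)" using InDec_le[OF a] by simp
        show ?thesis unfolding USet_def InU_def using a b c d by blast
      qed
      ultimately show ?thesis by blast
    qed
    then show "\<exists>r. computable_in h0 r \<and> (\<forall>n. \<exists>S. is_D (r n) S \<and> card S \<le> \<phi> n \<and> g' n \<in> S)"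
      using cr by blast
  qed
  then show ?thesis unfolding computably_traceable_def using h0(1) by blast
qed


end
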